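(* Let $(\gamma^\sharp,\lambda^\sharp)$ be an eligible pair. Then $1-\gamma^{0T}\Sigma_{-1,-1}\gamma^\sharp\ge\Lambda_{\min}^2-o(1)$; in particular $1-\gamma^{0T}\Sigma_{-1,-1}\gamma^\sharp$ is eventually strictly positive and bounded away from zero. For $n$ sufficiently large define $$\Theta_1^\sharp:=\begin{pmatrix}1\\-\gamma^\sharp\end{pmatrix}\Big/\big(1-\gamma^{0T}\Sigma_{-1,-1}\gamma^\sharp\big)\in\mathbb{R}^p .$$ Then $\|\Sigma(\Theta_1^\sharp-\Theta_1)\|_\infty\le\lambda_0^\sharp$, where $\lambda_0^\sharp:=\lambda^\sharp/(1-\gamma^{0T}\Sigma_{-1,-1}\gamma^\sharp)=\mathcal{O}(\lambda^\sharp)$. Moreover $$\Theta_1^{\sharp T}\Sigma\Theta_1^\sharp=\Theta^\sharp_{1,1}+o(1)\le\Theta_{1,1}+o(1),$$ where $\Theta^\sharp_{1,1}$ denotes the first entry of $\Theta_1^\sharp$. Finally, in order that $\Theta_{1,1}-\Theta^\sharp_{1,1}$ be strictly positive and bounded away from zero, it must be true that $\lambda^\sharp\|\gamma^0\|_1$ is strictly positive and bounded away from zero.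
   Context: Asymptotic framework: all quantities may depend on $n$; limits are as $n\to\infty$. $\mathbf{x}=(\mathbf{x}_1,\dots,\mathbf{x}_p)$ is a zero-mean Gaussian row vector with covariance $\Sigma=\mathbb{E}\mathbf{x}^T\mathbf{x}$, nonsingular with all diagonal entries $1$ and smallest eigenvalue $\Lambda_{\min}^2$ with $1/\Lambda_{\min}^2=\mathcal{O}(1)$. $\Theta:=\Sigma^{-1}$, $\Theta_1$ is its first column and $\Theta_{1,1}$ its $(1,1)$ entry. $\mathbf{x}_{-1}:=(\mathbf{x}_2,\dots,\mathbf{x}_p)$, $\Sigma_{-1,-1}:=\mathbb{E}\mathbf{x}_{-1}^T\mathbf{x}_{-1}$, and $\gamma^0:=\Sigma_{-1,-1}^{-1}\mathbb{E}\mathbf{x}_{-1}^T\mathbf{x}_1\in\mathbb{R}^{p-1}$ is the coefficient vector of the projection of $\mathbf{x}_1$ on $\mathbf{x}_{-1}$. A pair $(\gamma^\sharp,\lambda^\sharp)$ with $\gamma^\sharp\in\mathbb{R}^{p-1}$, $\lambda^\sharp>0$ is called eligible if $\|\Sigma_{-1,-1}(\gamma^\sharp-\gamma^0)\|_\infty\le\lambda^\sharp$ and $\lambda^\sharp\|\gamma^\sharp\|_1\to0$. *)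

theory Defs
  imports "Jordan_Normal_Form.Matrix" "Jordan_Normal_Form.Char_Poly" "HOL-Library.Landau_Symbols"
begin

text \<open>Indices are 0-based: index 0 corresponds to x_1, index i+1 to x_(i+2).\<close>

definition sub_mm :: "real mat \<Rightarrow> real mat" where
  "sub_mm S = mat (dim_row S - 1) (dim_col S - 1) (\<lambda>(i,j). S $$ (i+1, j+1))"

definition sub_m1 :: "real mat \<Rightarrow> real vec" where
  "sub_m1 S = vec (dim_row S - 1) (\<lambda>i. S $$ (i+1, 0))"

definition vnorm_inf :: "real vec \<Rightarrow> real" where
  "vnorm_inf v = Max (insert 0 {\<bar>v $ i\<bar> | i. i < dim_vec v})"

definition vnorm_1 :: "real vec \<Rightarrow> real" where
  "vnorm_1 v = (\<Sum>i<dim_vec v. \<bar>v $ i\<bar>)"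

definition theta_sharp :: "real mat \<Rightarrow> real vec \<Rightarrow> real vec \<Rightarrow> real vec" where
  "theta_sharp S g0 g = (1 / (1 - g0 \<bullet> (sub_mm S *\<^sub>v g))) \<cdot>\<^sub>v
     vec (dim_row S) (\<lambda>i. if i = 0 then 1 else - (g $ (i - 1)))"

end

theory Submission
  imports Defs
begin

definition ip :: "nat \<Rightarrow> (nat \<Rightarrow> real) \<Rightarrow> (nat \<Rightarrow> real) \<Rightarrow> real" where
  "ip n x y = (\<Sum>i<n. x i * y i)"
definition mv :: "nat \<Rightarrow> (nat \<Rightarrow> nat \<Rightarrow> real) \<Rightarrow> (nat \<Rightarrow> real) \<Rightarrow> nat \<Rightarrow> real" where
  "mv n C x = (\<lambda>i. \<Sum>j<n. C i j * x j)"

lemma ip_lin_left: "ip n (\<lambda>i. x i + t * y i) z = ip n x z + t * ip n y z"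
  by (simp add: ip_def algebra_simps sum.distrib sum_distrib_left)
lemma ip_lin_right: "ip n z (\<lambda>i. x i + t * y i) = ip n z x + t * ip n z y"
  by (simp add: ip_def algebra_simps sum.distrib sum_distrib_left)
lemma ip_comm: "ip n x y = ip n y x"
  by (simp add: ip_def mult.commute)
lemma mv_lin: "mv n C (\<lambda>i. x i + t * y i) = (\<lambda>i. mv n C x i + t * mv n C y i)"
  by (simp add: mv_def algebra_simps sum.distrib sum_distrib_left fun_eq_iff)
lemma ip_scale: "ip n (\<lambda>i. c * x i) (\<lambda>i. c * y i) = c^2 * ip n x y"
  by (simp add: ip_def algebra_simps sum_distrib_left power2_eq_square)
lemma mv_scale: "mv n C (\<lambda>i. c * x i) = (\<lambda>i. c * mv n C x i)"
  by (simp add: mv_def algebra_simps sum_distrib_left fun_eq_iff)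
lemma ip_self_nonneg: "0 \<le> ip n x x"
  by (simp add: ip_def sum_nonneg)
lemma ip_cong: "(\<And>i. i < n \<Longrightarrow> x i = x' i) \<Longrightarrow> (\<And>i. i < n \<Longrightarrow> y i = y' i) \<Longrightarrow> ip n x y = ip n x' y'"
  by (simp add: ip_def)
lemma mv_cong: "(\<And>i. i < n \<Longrightarrow> y i = y' i) \<Longrightarrow> mv n C y = mv n C y'"
  by (simp add: mv_def)

lemma ip_mv_sym:
  assumes "\<And>i j. i<n \<Longrightarrow> j<n \<Longrightarrow> C i j = C j i"
  shows "ip n x (mv n C y) = ip n y (mv n C x)"
proof -
  have "ip n x (mv n C y) = (\<Sum>i<n. \<Sum>j<n. x i * C i j * y j)"
    by (simp add: ip_def mv_def sum_distrib_left mult.assoc)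
  also have "\<dots> = (\<Sum>j<n. \<Sum>i<n. x i * C i j * y j)" by (rule sum.swap)
  also have "\<dots> = (\<Sum>j<n. \<Sum>i<n. y j * C j i * x i)"
    using assms by (intro sum.cong refl) (simp add: mult.commute mult.left_commute)
  also have "\<dots> = ip n y (mv n C x)"
    by (simp add: ip_def mv_def sum_distrib_left mult.assoc)
  finally show ?thesis .
qed

lemma quad_disc:
  fixes a b c :: real
  assumes q: "\<And>t. 0 \<le> a + 2*b*t + c*t^2" and c0: "0 \<le> c"
  shows "b^2 \<le> a*c"
proof (cases "c = 0")
  case True
  have "b = 0"
  proof (rule ccontr)
    assume b: "b \<noteq> 0"
    have "0 \<le> a + 2*b*(-(a+1)/(2*b)) + c*(-(a+1)/(2*b))^2" by (rule q)
    with True b show False by (simp add: field_simps)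
  qed
  with True show ?thesis by simp
next
  case False
  then have c: "c > 0" using c0 by simp
  have "0 \<le> a + 2*b*(-b/c) + c*(-b/c)^2" by (rule q)
  also have "\<dots> = a - b^2/c" using c by (simp add: field_simps power2_eq_square)
  finally have "b^2/c \<le> a" by simp
  thus ?thesis using c by (simp add: field_simps mult.commute)
qed

lemma ip_cs: "(ip n x y)^2 \<le> ip n x x * ip n y y"
proof -
  have "0 \<le> ip n x x + 2 * ip n x y * t + ip n y y * t^2" for t
  proof -
    have "0 \<le> ip n (\<lambda>i. x i + t * y i) (\<lambda>i. x i + t * y i)" by (rule ip_self_nonneg)
    also have "\<dots> = ip n x x + 2 * ip n x y * t + ip n y y * t^2"
      by (simp add: ip_def algebra_simps sum.distrib sum_distrib_left power2_eq_square)
    finally show ?thesis .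
  qed
  from quad_disc[OF this ip_self_nonneg] show ?thesis .
qed

lemma psd_cs:
  assumes sym: "\<And>i j. i<n \<Longrightarrow> j<n \<Longrightarrow> C i j = C j i"
    and psd: "\<And>z. 0 \<le> ip n z (mv n C z)"
  shows "(ip n y (mv n C x))^2 \<le> ip n x (mv n C x) * ip n y (mv n C y)"
proof -
  have "0 \<le> ip n x (mv n C x) + 2 * ip n y (mv n C x) * t + ip n y (mv n C y) * t^2" for t
  proof -
    have "0 \<le> ip n (\<lambda>i. x i + t * y i) (mv n C (\<lambda>i. x i + t * y i))" by (rule psd)
    also have "\<dots> = ip n x (mv n C x) + t * ip n x (mv n C y) + t * (ip n y (mv n C x) + t * ip n y (mv n C y))"
      unfolding mv_lin ip_lin_left ip_lin_right by simp
    also have "\<dots> = ip n x (mv n C x) + 2 * ip n y (mv n C x) * t + ip n y (mv n C y) * t^2"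
      using ip_mv_sym[OF sym, where x=x and y=y] by (simp add: algebra_simps power2_eq_square)
    finally show ?thesis .
  qed
  from quad_disc[OF this psd] show ?thesis .
qed

lemma sq_le_ip: "i < n \<Longrightarrow> (x i)^2 \<le> ip n x x"
  unfolding ip_def power2_eq_square by (rule member_le_sum) auto

lemma prod_le_ip: assumes "i<n" "j<n" shows "\<bar>x i * x j\<bar> \<le> ip n x x"
proof -
  have "0 \<le> (\<bar>x i\<bar> - \<bar>x j\<bar>)^2" by simp
  hence "2*\<bar>x i * x j\<bar> \<le> (x i)^2 + (x j)^2"
    by (simp add: power2_eq_square algebra_simps abs_mult)
  with sq_le_ip[OF assms(1), of x] sq_le_ip[OF assms(2), of x] show ?thesis by simp
qed

lemma qf_bound: "\<bar>ip n x (mv n C x)\<bar> \<le> (\<Sum>i<n. \<Sum>j<n. \<bar>C i j\<bar>) * ip n x x"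
proof -
  have "ip n x (mv n C x) = (\<Sum>i<n. \<Sum>j<n. C i j * (x i * x j))"
    by (simp add: ip_def mv_def sum_distrib_left algebra_simps)
  hence "\<bar>ip n x (mv n C x)\<bar> \<le> (\<Sum>i<n. \<bar>\<Sum>j<n. C i j * (x i * x j)\<bar>)"
    by (simp add: sum_abs)
  also have "\<dots> \<le> (\<Sum>i<n. \<Sum>j<n. \<bar>C i j * (x i * x j)\<bar>)"
    by (intro sum_mono sum_abs)
  also have "\<dots> \<le> (\<Sum>i<n. \<Sum>j<n. \<bar>C i j\<bar> * ip n x x)"
    by (intro sum_mono) (auto simp: abs_mult intro!: mult_left_mono prod_le_ip[simplified abs_mult])
  also have "\<dots> = (\<Sum>i<n. \<Sum>j<n. \<bar>C i j\<bar>) * ip n x x"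
    by (simp add: sum_distrib_right)
  finally show ?thesis .
qed

lemma mv_bound: "ip n (mv n D z) (mv n D z) \<le> (\<Sum>i<n. \<Sum>j<n. (D i j)^2) * ip n z z"
proof -
  have "ip n (mv n D z) (mv n D z) = (\<Sum>i<n. (ip n (D i) z)^2)"
    by (simp add: ip_def mv_def power2_eq_square)
  also have "\<dots> \<le> (\<Sum>i<n. ip n (D i) (D i) * ip n z z)"
    by (intro sum_mono ip_cs)
  also have "\<dots> = (\<Sum>i<n. \<Sum>j<n. (D i j)^2) * ip n z z"
    by (simp add: ip_def sum_distrib_right power2_eq_square)
  finally show ?thesis .
qed

lemma rayleigh_core:
  fixes C :: "nat \<Rightarrow> nat \<Rightarrow> real" and \<mu> :: real
  assumes sym: "\<And>i j. i<n \<Longrightarrow> j<n \<Longrightarrow> C i j = C j i"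
    and eig: "\<And>m x. (\<exists>i<n. x i \<noteq> 0) \<Longrightarrow> (\<forall>i<n. mv n C x i = m * x i) \<Longrightarrow> \<mu> \<le> m"
    and inv: "\<And>m. \<not>(\<exists>x. (\<exists>i<n. x i \<noteq> 0) \<and> (\<forall>i<n. mv n C x i = m * x i)) \<Longrightarrow>
               \<exists>D. \<forall>y i. i<n \<longrightarrow> y i = mv n D (\<lambda>j. mv n C y j - m * y j) i"
  shows "\<mu> * ip n x x \<le> ip n x (mv n C x)"
proof (cases "n = 0")
  case True
  then show ?thesis by (simp add: ip_def)
next
  case False
  hence n: "0 < n" by simp
  define Q where "Q y = ip n y (mv n C y)" for y
  define K where "K = (\<Sum>i<n. \<Sum>j<n. \<bar>C i j\<bar>)"
  define U where "U = {y. ip n y y = 1}"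
  define e0 :: "nat \<Rightarrow> real" where "e0 = (\<lambda>i. if i = 0 then 1 else 0)"
  have "ip n e0 e0 = (\<Sum>i<n. e0 i)" unfolding ip_def e0_def by (rule sum.cong) auto
  also have "\<dots> = 1" using n by (simp add: e0_def)
  finally have "ip n e0 e0 = 1" .
  hence e0U: "e0 \<in> U" by (simp add: U_def)
  have bdd: "bdd_below (Q ` U)"
  proof (rule bdd_belowI2)
    fix y assume "y \<in> U"
    hence "ip n y y = 1" by (simp add: U_def)
    with qf_bound[of n y C] show "- K \<le> Q y" by (simp add: Q_def K_def)
  qed
  define m where "m = Inf (Q ` U)"
  have mU: "m \<le> Q y" if "y \<in> U" for y
    unfolding m_def using bdd that by (intro cInf_lower) auto
  have A: "m * ip n y y \<le> Q y" for y
  proof (cases "ip n y y = 0")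
    case True
    with qf_bound[of n y C] show ?thesis by (simp add: Q_def)
  next
    case False
    with ip_self_nonneg[of n y] have pos: "ip n y y > 0" by simp
    define r where "r = sqrt (ip n y y)"
    have r: "r > 0" "r^2 = ip n y y" using pos by (auto simp: r_def)
    define z where "z = (\<lambda>i. (1/r) * y i)"
    have "ip n z z = (1/r)^2 * ip n y y" unfolding z_def by (rule ip_scale)
    hence "ip n z z = 1" using r pos by (simp add: power_divide)
    hence "m \<le> Q z" by (intro mU) (simp add: U_def)
    also have "Q z = (1/r)^2 * Q y"
      unfolding Q_def z_def mv_scale by (rule ip_scale)
    finally have "m \<le> Q y / ip n y y" using r by (simp add: power_divide)
    thus ?thesis using pos by (simp add: field_simps)
  qed
  show ?thesis
  proof (cases "\<exists>x. (\<exists>i<n. x i \<noteq> 0) \<and> (\<forall>i<n. mv n C x i = m * x i)")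
    case True
    then obtain v where "\<exists>i<n. v i \<noteq> 0" "\<forall>i<n. mv n C v i = m * v i" by blast
    from eig[OF this] have "\<mu> \<le> m" .
    hence "\<mu> * ip n x x \<le> m * ip n x x" by (intro mult_right_mono ip_self_nonneg)
    also have "\<dots> \<le> Q x" by (rule A)
    finally show ?thesis by (simp add: Q_def)
  next
    case False
    from inv[OF this] obtain D where D: "\<And>y i. i<n \<Longrightarrow> y i = mv n D (\<lambda>j. mv n C y j - m * y j) i"
      by blast
    define Cm where "Cm i j = C i j - (if i = j then m else 0)" for i j
    have Cm_mv: "mv n Cm y i = mv n C y i - m * y i" if "i < n" for y i
    proof -
      have "mv n Cm y i = (\<Sum>j<n. C i j * y j) - (\<Sum>j<n. (if i = j then m else 0) * y j)"
        by (simp add: mv_def Cm_def algebra_simps sum_subtractf)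
      also have "(\<Sum>j<n. (if i = j then m else 0) * y j) = m * y i"
      proof -
        have "(\<Sum>j<n. (if i = j then m else 0) * y j) = (\<Sum>j<n. if i = j then m * y j else 0)"
          by (rule sum.cong) auto
        also have "\<dots> = m * y i" using that by simp
        finally show ?thesis .
      qed
      finally show ?thesis by (simp add: mv_def)
    qed
    have Cm_sym: "\<And>i j. i<n \<Longrightarrow> j<n \<Longrightarrow> Cm i j = Cm j i" using sym by (auto simp: Cm_def)
    have Cm_q: "ip n z (mv n Cm z) = Q z - m * ip n z z" for z
    proof -
      have "ip n z (mv n Cm z) = ip n z (\<lambda>i. mv n C z i + (-m) * z i)"
        by (rule ip_cong) (auto simp: Cm_mv)
      thus ?thesis unfolding Q_def by (simp only: ip_lin_right)
    qed
    have psd: "0 \<le> ip n z (mv n Cm z)" for z using A[of z] by (simp add: Cm_q)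
    define K' where "K' = (\<Sum>i<n. \<Sum>j<n. \<bar>Cm i j\<bar>)"
    define L where "L = (\<Sum>i<n. \<Sum>j<n. (D i j)^2)"
    have K'0: "0 \<le> K'" unfolding K'_def by (intro sum_nonneg) auto
    have L0: "0 \<le> L" unfolding L_def by (intro sum_nonneg) auto
    have key: "1 \<le> L * K' * (Q x - m)" if xU: "x \<in> U" for x
    proof -
      have xx: "ip n x x = 1" using xU by (simp add: U_def)
      define z where "z = mv n Cm x"
      have "mv n D (\<lambda>j. mv n C x j - m * x j) = mv n D z"
        unfolding z_def by (rule mv_cong) (simp add: Cm_mv)
      hence xD: "x i = mv n D z i" if "i < n" for i using D[OF that, of x] by simp
      have "1 = ip n (mv n D z) (mv n D z)" using xx
        by (metis (no_types, lifting) ip_cong xD)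
      also have "\<dots> \<le> L * ip n z z" unfolding L_def by (rule mv_bound)
      finally have one: "1 \<le> L * ip n z z" .
      have c1: "(ip n z z)^2 \<le> ip n x (mv n Cm x) * ip n z (mv n Cm z)"
        using psd_cs[OF Cm_sym psd, of z x] by (simp add: z_def)
      have c2: "ip n x (mv n Cm x) = Q x - m" using xx by (simp add: Cm_q)
      have c3: "ip n z (mv n Cm z) \<le> K' * ip n z z"
        using qf_bound[of n z Cm] unfolding K'_def by simp
      have c4: "0 \<le> Q x - m" using psd[of x] c2 by simp
      have sq: "(ip n z z)^2 \<le> (Q x - m) * (K' * ip n z z)"
        using c1 c2 c3 c4 mult_left_mono[OF c3 c4] by simp
      have zpos: "ip n z z > 0"
      proof (rule ccontr)
        assume "\<not> ?thesis"
        with ip_self_nonneg[of n z] have "ip n z z = 0" by simp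
        with one show False by simp
      qed
      have "ip n z z * ip n z z \<le> ((Q x - m) * K') * ip n z z"
        using sq by (simp only: power2_eq_square mult.assoc mult.commute mult.left_commute)
      hence "ip n z z \<le> (Q x - m) * K'" using zpos by (rule mult_right_le_imp_le)
      hence "L * ip n z z \<le> L * ((Q x - m) * K')" using L0 by (rule mult_left_mono)
      with one show ?thesis by (simp add: algebra_simps)
    qed
    define P where "P = L * K'"
    have P0: "0 \<le> P" using L0 K'0 by (simp add: P_def)
    have "Inf (Q ` U) < m + 1 / (P + 1)" using P0 by (simp add: m_def)
    then obtain y where yU: "y \<in> U" and yQ: "Q y < m + 1 / (P + 1)"
      using cInf_less_iff[of "Q ` U"] bdd e0U by blast
    have d0: "0 \<le> Q y - m" using mU[OF yU] by simp
    have "(Q y - m) * (P + 1) < 1" using yQ P0 by (simp add: field_simps)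
    moreover have "P * (Q y - m) \<le> (Q y - m) * (P + 1)" using d0 by (simp add: algebra_simps)
    ultimately have "P * (Q y - m) < 1" by simp
    with key[OF yU] show ?thesis by (simp add: P_def)
  qed
qed

lemma shift_mv:
  assumes "i < n"
  shows "(\<Sum>j<n. (C i j - (if i = j then m else 0)) * y j) = mv n C y i - m * y i"
proof -
  have "(\<Sum>j<n. (C i j - (if i = j then m else 0)) * y j) =
        (\<Sum>j<n. C i j * y j) - (\<Sum>j<n. (if i = j then m else 0) * y j)"
    by (simp add: algebra_simps sum_subtractf)
  also have "(\<Sum>j<n. (if i = j then m else 0) * y j) = (\<Sum>j<n. if i = j then m * y j else 0)"
    by (rule sum.cong) auto
  also have "\<dots> = m * y i" using assms by simp
  finally show ?thesis by (simp add: mv_def)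
qed

lemma mat_vec_sum:
  assumes "A \<in> carrier_mat n n" "i < n"
  shows "(A *\<^sub>v vec n y) $ i = (\<Sum>j<n. A $$ (i,j) * y j)"
  using assms by (auto simp: mult_mat_vec_def scalar_prod_def lessThan_atLeast0 intro!: sum.cong)

lemma rayleigh_mat:
  fixes A :: "real mat"
  assumes A: "A \<in> carrier_mat n n" and sym: "transpose_mat A = A"
    and eig: "\<And>k. eigenvalue A k \<Longrightarrow> \<mu> \<le> k"
  shows "\<mu> * (\<Sum>i<n. (x i)^2) \<le> (\<Sum>i<n. x i * (\<Sum>j<n. A $$ (i,j) * x j))"
proof -
  define C where "C i j = A $$ (i,j)" for i j
  have Csym: "C i j = C j i" if "i<n" "j<n" for i j
  proof -
    have "A $$ (i,j) = transpose_mat A $$ (i,j)" using sym by simp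
    also have "\<dots> = A $$ (j,i)" using A that by simp
    finally show ?thesis by (simp add: C_def)
  qed
  have mvA: "(A *\<^sub>v vec n y) $ i = mv n C y i" if "i < n" for y i
    using mat_vec_sum[OF A that] by (simp add: mv_def C_def)
  have core: "\<mu> * ip n x x \<le> ip n x (mv n C x)"
  proof (rule rayleigh_core[OF Csym])
    fix m and v :: "nat \<Rightarrow> real"
    assume nz: "\<exists>i<n. v i \<noteq> 0" and ev: "\<forall>i<n. mv n C v i = m * v i"
    have "eigenvector A (vec n v) m"
      unfolding eigenvector_def
    proof (intro conjI)
      show "vec n v \<in> carrier_vec (dim_row A)" using A by simp
      show "vec n v \<noteq> 0\<^sub>v (dim_row A)"
      proof
        assume "vec n v = 0\<^sub>v (dim_row A)"
        hence "\<forall>i<n. v i = 0" using A by (metis carrier_matD(1) index_vec index_zero_vec(1))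
        with nz show False by blast
      qed
      show "A *\<^sub>v vec n v = m \<cdot>\<^sub>v vec n v"
        by (rule eq_vecI) (use A ev mvA in auto)
    qed
    hence "eigenvalue A m" unfolding eigenvalue_def by blast
    thus "\<mu> \<le> m" by (rule eig)
  next
    fix m
    assume noev: "\<not>(\<exists>v. (\<exists>i<n. v i \<noteq> 0) \<and> (\<forall>i<n. mv n C v i = m * v i))"
    define Cm where "Cm = mat n n (\<lambda>(i,j). C i j - (if i = j then m else 0))"
    have Cm: "Cm \<in> carrier_mat n n" by (simp add: Cm_def)
    have Cm_mv: "(Cm *\<^sub>v vec n y) $ i = mv n C y i - m * y i" if "i < n" for y i
      using mat_vec_sum[OF Cm that, of y] that shift_mv[OF that, of C m y]
      by (simp add: Cm_def)
    have "det Cm \<noteq> 0"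
    proof
      assume "det Cm = 0"
      from this[unfolded det_0_iff_vec_prod_zero[OF Cm]] obtain w where
        w: "w \<in> carrier_vec n" "w \<noteq> 0\<^sub>v n" "Cm *\<^sub>v w = 0\<^sub>v n" by blast
      have wv: "w = vec n (\<lambda>i. w $ i)" using w(1) by auto
      have "\<exists>i<n. w $ i \<noteq> 0"
      proof (rule ccontr)
        assume "\<not> ?thesis"
        hence "w = 0\<^sub>v n" using w(1) by (intro eq_vecI) auto
        with w(2) show False by simp
      qed
      moreover have "\<forall>i<n. mv n C (\<lambda>i. w $ i) i = m * w $ i"
      proof (intro allI impI)
        fix i assume i: "i < n"
        have "(Cm *\<^sub>v vec n (\<lambda>i. w $ i)) $ i = 0" using w(3) wv i by simp
        with Cm_mv[OF i] show "mv n C (\<lambda>i. w $ i) i = m * w $ i" by simp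
      qed
      ultimately show False using noev by blast
    qed
    from det_non_zero_imp_unit[OF Cm this, of undefined]
    obtain Dm where Dm: "Dm \<in> carrier_mat n n" "Dm * Cm = 1\<^sub>m n"
      unfolding Units_def ring_mat_def by auto
    show "\<exists>D. \<forall>y i. i < n \<longrightarrow> y i = mv n D (\<lambda>j. mv n C y j - m * y j) i"
    proof (intro exI allI impI)
      fix y :: "nat \<Rightarrow> real" and i assume i: "i < n"
      have "vec n y = (Dm * Cm) *\<^sub>v vec n y" using Dm by simp
      also have "\<dots> = Dm *\<^sub>v (Cm *\<^sub>v vec n y)" by (rule assoc_mult_mat_vec) (use Dm Cm in auto)
      also have "Cm *\<^sub>v vec n y = vec n (\<lambda>j. mv n C y j - m * y j)"
        using Cm Cm_mv by (intro eq_vecI) auto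
      finally have "vec n y $ i = (Dm *\<^sub>v vec n (\<lambda>j. mv n C y j - m * y j)) $ i" by simp
      also have "\<dots> = (\<Sum>j<n. Dm $$ (i,j) * (mv n C y j - m * y j))"
        by (rule mat_vec_sum[OF Dm(1) i])
      finally show "y i = mv n (\<lambda>i j. Dm $$ (i,j)) (\<lambda>j. mv n C y j - m * y j) i"
        using i by (simp add: mv_def)
    qed
  qed
  thus ?thesis by (simp add: ip_def mv_def C_def power2_eq_square)
qed

lemma ip_Suc: "ip (Suc k) x y = x 0 * y 0 + ip k (\<lambda>i. x (Suc i)) (\<lambda>i. y (Suc i))"
  unfolding ip_def by (rule sum.lessThan_Suc_shift)

lemma mv_Suc: "mv (Suc k) C x i = C i 0 * x 0 + (\<Sum>j<k. C i (Suc j) * x (Suc j))"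
  unfolding mv_def by (rule sum.lessThan_Suc_shift)

lemma ip_abs_bound:
  assumes "\<And>i. i < k \<Longrightarrow> \<bar>w i\<bar> \<le> c"
  shows "\<bar>ip k x w\<bar> \<le> c * (\<Sum>i<k. \<bar>x i\<bar>)"
proof -
  have "\<bar>ip k x w\<bar> \<le> (\<Sum>i<k. \<bar>x i * w i\<bar>)" unfolding ip_def by (rule sum_abs)
  also have "\<dots> \<le> (\<Sum>i<k. \<bar>x i\<bar> * c)"
    by (intro sum_mono) (auto simp: abs_mult intro!: mult_left_mono assms)
  also have "\<dots> = c * (\<Sum>i<k. \<bar>x i\<bar>)" by (simp add: sum_distrib_left mult.commute)
  finally show ?thesis .
qed

lemma vnorm_inf_ge: "i < dim_vec v \<Longrightarrow> \<bar>v $ i\<bar> \<le> vnorm_inf v"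
  unfolding vnorm_inf_def
proof (rule Max_ge)
  have "{\<bar>v $ i\<bar> |i. i < dim_vec v} = (\<lambda>i. \<bar>v $ i\<bar>) ` {..<dim_vec v}" by auto
  thus "finite (insert 0 {\<bar>v $ i\<bar> |i. i < dim_vec v})" by simp
qed auto

lemma vnorm_inf_le:
  assumes "\<And>i. i < dim_vec v \<Longrightarrow> \<bar>v $ i\<bar> \<le> c" "0 \<le> c"
  shows "vnorm_inf v \<le> c"
  unfolding vnorm_inf_def
proof (rule Max.boundedI)
  have "{\<bar>v $ i\<bar> |i. i < dim_vec v} = (\<lambda>i. \<bar>v $ i\<bar>) ` {..<dim_vec v}" by auto
  thus "finite (insert 0 {\<bar>v $ i\<bar> |i. i < dim_vec v})" by simp
qed (use assms in auto)

lemma vnorm_1_eq: "v \<in> carrier_vec k \<Longrightarrow> vnorm_1 v = (\<Sum>i<k. \<bar>v $ i\<bar>)"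
  by (simp add: vnorm_1_def)

lemma ip_zero: "ip n x (\<lambda>i. 0) = 0"
  by (simp add: ip_def)

lemma mv_diff: "mv n C (\<lambda>i. x i - y i) = (\<lambda>i. mv n C x i - mv n C y i)"
  by (simp add: mv_def sum_subtractf algebra_simps fun_eq_iff)

lemma vnorm_inf_nonneg: "0 \<le> vnorm_inf v"
  unfolding vnorm_inf_def
proof (rule Max_ge_iff[THEN iffD2])
  have "{\<bar>v $ i\<bar> |i. i < dim_vec v} = (\<lambda>i. \<bar>v $ i\<bar>) ` {..<dim_vec v}" by auto
  thus "finite (insert 0 {\<bar>v $ i\<bar> |i. i < dim_vec v})" by simp
qed auto

lemma ip_negl: "ip n (\<lambda>i. - x i) y = - ip n x y"
  by (simp add: ip_def sum_negf)
lemma ip_negr: "ip n x (\<lambda>i. - y i) = - ip n x y"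
  by (simp add: ip_def sum_negf)
lemma mv_neg: "mv n C (\<lambda>i. - x i) = (\<lambda>i. - mv n C x i)"
  by (simp add: mv_def sum_negf fun_eq_iff)

lemma fixed_n:
  fixes S Th :: "real mat" and g0 g :: "real vec" and \<mu> ls :: real and p :: nat
  assumes p1: "p \<ge> 1" and S: "S \<in> carrier_mat p p" and sym: "transpose_mat S = S"
    and diag: "\<And>i. i<p \<Longrightarrow> S $$ (i,i) = 1"
    and Th: "Th \<in> carrier_mat p p" and inv: "inverts_mat S Th \<and> inverts_mat Th S"
    and eig: "\<And>k. eigenvalue S k \<Longrightarrow> \<mu> \<le> k" and mu0: "0 \<le> \<mu>"
    and g0: "g0 \<in> carrier_vec (p-1)" and g0def: "sub_mm S *\<^sub>v g0 = sub_m1 S"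
    and g: "g \<in> carrier_vec (p-1)"
    and el: "vnorm_inf (sub_mm S *\<^sub>v (g - g0)) \<le> ls"
  defines "s0 \<equiv> 1 - g0 \<bullet> (sub_mm S *\<^sub>v g0)" and "s \<equiv> 1 - g0 \<bullet> (sub_mm S *\<^sub>v g)"
  shows "\<mu> \<le> s0" "s0 - ls * vnorm_1 g \<le> s" "s \<le> s0 + ls * vnorm_1 g0" "Th $$ (0,0) * s0 = 1"
    "s > 0 \<Longrightarrow> vnorm_inf (S *\<^sub>v (theta_sharp S g0 g - col Th 0)) \<le> ls / s"
    "s \<noteq> 0 \<Longrightarrow> \<bar>theta_sharp S g0 g \<bullet> (S *\<^sub>v theta_sharp S g0 g) - theta_sharp S g0 g $ 0\<bar> \<le> ls * vnorm_1 g / s^2"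
    "theta_sharp S g0 g $ 0 = 1 / s"
proof -
  obtain k where pk: "p = Suc k" using p1 by (cases p) auto
  define Sf where "Sf = (\<lambda>i j. S $$ (i,j))"
  define M where "M i j = S $$ (Suc i, Suc j)" for i j
  define \<sigma> where "\<sigma> i = S $$ (Suc i, 0)" for i
  define g0f where "g0f = (\<lambda>i. g0 $ i)"
  define gf where "gf = (\<lambda>i. g $ i)"
  have Sfsym: "Sf i j = Sf j i" if "i < p" "j < p" for i j
  proof -
    have "S $$ (i,j) = transpose_mat S $$ (i,j)" using sym by simp
    also have "\<dots> = S $$ (j,i)" using S that by simp
    finally show ?thesis by (simp add: Sf_def)
  qed
  have Msym: "M i j = M j i" if "i < k" "j < k" for i j
    using Sfsym[of "Suc i" "Suc j"] that pk by (simp add: Sf_def M_def)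
  have sig0: "S $$ (0, Suc j) = \<sigma> j" if "j < k" for j
    using Sfsym[of 0 "Suc j"] that pk by (simp add: Sf_def \<sigma>_def)
  have subS: "sub_mm S \<in> carrier_mat k k" using S pk by (simp add: sub_mm_def)
  have sub_mv: "(sub_mm S *\<^sub>v y) $ i = mv k M (\<lambda>j. y $ j) i" if "y \<in> carrier_vec k" "i < k" for y i
    using that S pk by (auto simp: sub_mm_def mult_mat_vec_def scalar_prod_def mv_def M_def lessThan_atLeast0 intro!: sum.cong)
  have dot_sub: "x \<bullet> (sub_mm S *\<^sub>v y) = ip k (\<lambda>i. x $ i) (mv k M (\<lambda>j. y $ j))"
    if "y \<in> carrier_vec k" for x y
    using that subS sub_mv by (auto simp: scalar_prod_def ip_def lessThan_atLeast0 intro!: sum.cong)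
  have g0k: "g0 \<in> carrier_vec k" and gk: "g \<in> carrier_vec k" using g0 g pk by auto
  have sigma_eq: "mv k M g0f i = \<sigma> i" if "i < k" for i
  proof -
    have "(sub_mm S *\<^sub>v g0) $ i = sub_m1 S $ i" using g0def by simp
    thus ?thesis using sub_mv[OF g0k that] that S pk by (simp add: sub_m1_def \<sigma>_def g0f_def)
  qed
  define w where "w i = mv k M gf i - \<sigma> i" for i
  have w_bound: "\<bar>w i\<bar> \<le> ls" if "i < k" for i
  proof -
    have gg: "g - g0 \<in> carrier_vec k" using g0k gk by simp
    have e1: "(sub_mm S *\<^sub>v (g - g0)) $ i = mv k M (\<lambda>j. (g - g0) $ j) i"
      by (rule sub_mv[OF gg that])
    have e2: "mv k M (\<lambda>j. (g - g0) $ j) = mv k M (\<lambda>j. gf j + (-1) * g0f j)"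
      by (rule mv_cong) (use g0k gk in \<open>simp add: gf_def g0f_def\<close>)
    have e3: "mv k M (\<lambda>j. gf j + (-1) * g0f j) i = w i"
      unfolding mv_lin using sigma_eq[OF that] by (simp add: w_def)
    have "\<bar>(sub_mm S *\<^sub>v (g - g0)) $ i\<bar> \<le> vnorm_inf (sub_mm S *\<^sub>v (g - g0))"
      using subS that by (intro vnorm_inf_ge) simp
    thus ?thesis using el e1 e2 e3 by simp
  qed
  have "ip k g0f (mv k M g0f) = ip k g0f \<sigma>" by (rule ip_cong) (auto simp: sigma_eq)
  hence s0_eq: "s0 = 1 - ip k g0f \<sigma>"
    unfolding s0_def dot_sub[OF g0k] by (simp add: g0f_def)
  have R: "\<mu> * ip p x x \<le> ip p x (mv p Sf x)" for x
    using rayleigh_mat[OF S sym eig, of x] by (simp add: ip_def mv_def Sf_def power2_eq_square)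
  have mvS0: "mv p Sf x 0 = x 0 + ip k \<sigma> (\<lambda>i. x (Suc i))" for x
  proof -
    have "mv p Sf x 0 = Sf 0 0 * x 0 + (\<Sum>j<k. Sf 0 (Suc j) * x (Suc j))"
      unfolding pk by (rule mv_Suc)
    also have "(\<Sum>j<k. Sf 0 (Suc j) * x (Suc j)) = ip k \<sigma> (\<lambda>i. x (Suc i))"
      unfolding ip_def by (rule sum.cong) (auto simp: Sf_def sig0)
    finally show ?thesis using diag[of 0] pk by (simp add: Sf_def)
  qed
  have mvSS: "mv p Sf x (Suc i) = \<sigma> i * x 0 + mv k M (\<lambda>j. x (Suc j)) i" for x i
    unfolding pk mv_Suc by (simp add: Sf_def \<sigma>_def M_def mv_def)
  have quadS: "ip p x (mv p Sf x) = x 0 * (x 0 + ip k \<sigma> (\<lambda>i. x (Suc i)))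
      + ip k (\<lambda>i. x (Suc i)) (\<lambda>i. \<sigma> i * x 0 + mv k M (\<lambda>j. x (Suc j)) i)" for x
    unfolding pk ip_Suc using mvS0[of x] mvSS[of x] pk by simp
  have psdM: "0 \<le> ip k d (mv k M d)" for d
  proof -
    define x where "x i = (if i = 0 then 0 else d (i - 1))" for i
    have xs: "(\<lambda>i. x (Suc i)) = d" by (simp add: x_def fun_eq_iff)
    have "0 \<le> \<mu> * ip p x x" using mu0 ip_self_nonneg by simp
    also have "\<dots> \<le> ip p x (mv p Sf x)" by (rule R)
    also have "\<dots> = ip k d (mv k M d)" unfolding quadS xs by (simp add: x_def)
    finally show ?thesis .
  qed
  have mvg0: "mv k M (\<lambda>j. - g0f j) i = - \<sigma> i" if "i < k" for i
    using sigma_eq[OF that] by (simp add: mv_neg)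
  define vf where "vf i = (if i = 0 then 1 else - g0f (i - 1))" for i
  have vfs: "(\<lambda>i. vf (Suc i)) = (\<lambda>i. - g0f i)" by (simp add: vf_def fun_eq_iff)
  have mv_vf0: "mv p Sf vf 0 = s0"
    unfolding mvS0 vfs ip_negr s0_eq by (simp add: vf_def ip_comm)
  have mv_vfS: "mv p Sf vf (Suc i) = 0" if "i < k" for i
    unfolding mvSS vfs using mvg0[OF that] by (simp add: vf_def)
  show "\<mu> \<le> s0"
  proof -
    have "ip p vf (mv p Sf vf) = s0"
    proof -
      have "ip p vf (mv p Sf vf) = vf 0 * mv p Sf vf 0 + ip k (\<lambda>i. vf (Suc i)) (\<lambda>i. mv p Sf vf (Suc i))"
        unfolding pk by (rule ip_Suc)
      also have "ip k (\<lambda>i. vf (Suc i)) (\<lambda>i. mv p Sf vf (Suc i)) = ip k (\<lambda>i. vf (Suc i)) (\<lambda>i. 0)"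
        by (rule ip_cong) (auto simp: mv_vfS)
      moreover have "vf 0 = 1" by (simp add: vf_def)
      ultimately show ?thesis using mv_vf0 by (simp add: ip_zero)
    qed
    moreover have "1 \<le> ip p vf vf"
    proof -
      have "ip p vf vf = vf 0 * vf 0 + ip k (\<lambda>i. vf (Suc i)) (\<lambda>i. vf (Suc i))"
        unfolding pk by (rule ip_Suc)
      thus ?thesis using ip_self_nonneg[of k "\<lambda>i. vf (Suc i)"] by (simp add: vf_def)
    qed
    ultimately show ?thesis using R[of vf] mu0 mult_left_mono[of 1 "ip p vf vf" \<mu>] by simp
  qed
  have gsum: "ip k g0f (mv k M gf) = ip k g0f \<sigma> + ip k g0f w"
  proof -
    have "ip k g0f (mv k M gf) = ip k g0f (\<lambda>i. \<sigma> i + 1 * w i)"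
      by (rule ip_cong) (auto simp: w_def)
    thus ?thesis unfolding ip_lin_right by simp
  qed
  have s_eq: "s = s0 - ip k g0f w"
    unfolding s_def dot_sub[OF gk] s0_eq using gsum by (simp add: g0f_def gf_def)
  have n1g: "vnorm_1 g = (\<Sum>i<k. \<bar>gf i\<bar>)" using gk by (simp add: vnorm_1_def gf_def)
  have n1g0: "vnorm_1 g0 = (\<Sum>i<k. \<bar>g0f i\<bar>)" using g0k by (simp add: vnorm_1_def g0f_def)
  show "s \<le> s0 + ls * vnorm_1 g0"
    using ip_abs_bound[of k w ls g0f] w_bound unfolding s_eq n1g0 by simp
  show "s0 - ls * vnorm_1 g \<le> s"
  proof -
    define d where "d i = gf i - g0f i" for i
    have "mv k M d i = w i" if "i < k" for i
    proof -
      have "mv k M d = mv k M (\<lambda>i. gf i - g0f i)" by (rule arg_cong[where f="mv k M"]) (simp add: d_def fun_eq_iff)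
      thus ?thesis using sigma_eq[OF that] by (simp add: mv_diff w_def)
    qed
    hence "ip k d w = ip k d (mv k M d)" by (intro ip_cong) auto
    hence dw: "0 \<le> ip k d w" using psdM[of d] by simp
    have "ip k g0f w = ip k gf w - ip k d w" by (simp add: ip_def d_def algebra_simps sum_subtractf)
    also have "\<dots> \<le> ip k gf w" using dw by simp
    also have "\<dots> \<le> ls * vnorm_1 g" using ip_abs_bound[of k w ls gf] w_bound unfolding n1g by simp
    finally show ?thesis unfolding s_eq by simp
  qed
  show "Th $$ (0,0) * s0 = 1"
  proof -
    define vv where "vv = vec p vf"
    have vv: "vv \<in> carrier_vec p" by (simp add: vv_def)
    have Svv: "S *\<^sub>v vv = vec p (\<lambda>i. if i = 0 then s0 else 0)"
    proof (rule eq_vecI)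
      fix i assume "i < dim_vec (vec p (\<lambda>i. if i = 0 then s0 else 0))"
      hence i: "i < p" by simp
      have "(S *\<^sub>v vv) $ i = mv p Sf vf i" unfolding vv_def using mat_vec_sum[OF S i, of vf]
        by (simp add: mv_def Sf_def)
      also have "\<dots> = (if i = 0 then s0 else 0)"
        using mv_vf0 mv_vfS i pk by (cases i) auto
      finally show "(S *\<^sub>v vv) $ i = vec p (\<lambda>i. if i = 0 then s0 else 0) $ i" using i by simp
    qed (use S in simp)
    have ThS: "Th * S = 1\<^sub>m p" using inv Th unfolding inverts_mat_def by simp
    have "vv = (Th * S) *\<^sub>v vv" using ThS vv by simp
    also have "\<dots> = Th *\<^sub>v (S *\<^sub>v vv)" by (rule assoc_mult_mat_vec) (use Th S vv in auto)
    finally have "vv $ 0 = (Th *\<^sub>v vec p (\<lambda>i. if i = 0 then s0 else 0)) $ 0" unfolding Svv by simp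
    also have "\<dots> = (\<Sum>j<p. Th $$ (0, j) * (if j = 0 then s0 else 0))"
      using mat_vec_sum[OF Th, of 0] pk by simp
    also have "\<dots> = (\<Sum>j<p. if j = 0 then Th $$ (0,0) * s0 else 0)" by (rule sum.cong) auto
    also have "\<dots> = Th $$ (0,0) * s0" using pk by simp
    finally show ?thesis using pk by (simp add: vv_def vf_def)
  qed
  define uf where "uf i = (if i = 0 then 1 else - g $ (i - 1))" for i
  have ufs: "(\<lambda>i. uf (Suc i)) = (\<lambda>i. - gf i)" by (simp add: uf_def gf_def fun_eq_iff)
  have uf0: "uf 0 = 1" by (simp add: uf_def)
  have "ip k g0f (mv k M gf) = ip k gf (mv k M g0f)" by (rule ip_mv_sym[OF Msym])
  also have "\<dots> = ip k gf \<sigma>" by (rule ip_cong) (auto simp: sigma_eq)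
  finally have s_alt: "s = 1 - ip k gf \<sigma>"
    unfolding s_def dot_sub[OF gk] by (simp add: g0f_def gf_def)
  have mv_uf0: "mv p Sf uf 0 = s"
    unfolding mvS0 ufs ip_negr s_alt by (simp add: uf0 ip_comm)
  have mv_ufS: "mv p Sf uf (Suc i) = - w i" if "i < k" for i
    unfolding mvSS ufs mv_neg by (simp add: uf0 w_def)
  have th_eq: "theta_sharp S g0 g = (1 / s) \<cdot>\<^sub>v vec p uf"
    unfolding theta_sharp_def s_def using S by (simp add: uf_def[abs_def])
  have th_idx: "theta_sharp S g0 g $ i = (1 / s) * uf i" if "i < p" for i
    using that by (simp add: th_eq)
  have th_dim: "dim_vec (theta_sharp S g0 g) = p" by (simp add: th_eq)
  show th0: "theta_sharp S g0 g $ 0 = 1 / s" using th_idx[of 0] pk by (simp add: uf0)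
  have ipuf: "ip p uf (mv p Sf uf) = s + ip k gf w"
  proof -
    have "ip p uf (mv p Sf uf) = uf 0 * mv p Sf uf 0 + ip k (\<lambda>i. uf (Suc i)) (\<lambda>i. mv p Sf uf (Suc i))"
      unfolding pk by (rule ip_Suc)
    also have "ip k (\<lambda>i. uf (Suc i)) (\<lambda>i. mv p Sf uf (Suc i)) = ip k (\<lambda>i. - gf i) (\<lambda>i. - w i)"
      unfolding ufs by (rule ip_cong) (auto simp: mv_ufS)
    finally show ?thesis by (simp add: uf0 mv_uf0 ip_negl ip_negr)
  qed
  have n1g: "vnorm_1 g = (\<Sum>i<k. \<bar>gf i\<bar>)" using gk by (simp add: vnorm_1_def gf_def)
  have gw: "\<bar>ip k gf w\<bar> \<le> ls * vnorm_1 g" using ip_abs_bound[of k w ls gf] w_bound unfolding n1g by simp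
  have Sth: "(S *\<^sub>v theta_sharp S g0 g) $ i = (1 / s) * mv p Sf uf i" if "i < p" for i
  proof -
    have "theta_sharp S g0 g = vec p (\<lambda>j. (1 / s) * uf j)" by (auto simp: th_eq)
    hence "(S *\<^sub>v theta_sharp S g0 g) $ i = (\<Sum>j<p. S $$ (i,j) * ((1 / s) * uf j))"
      using mat_vec_sum[OF S that] by simp
    also have "\<dots> = (1 / s) * mv p Sf uf i" by (simp add: mv_def Sf_def sum_distrib_left algebra_simps)
    finally show ?thesis .
  qed
  show "s \<noteq> 0 \<Longrightarrow> \<bar>theta_sharp S g0 g \<bullet> (S *\<^sub>v theta_sharp S g0 g) - theta_sharp S g0 g $ 0\<bar> \<le> ls * vnorm_1 g / s^2"
  proof -
    assume s0: "s \<noteq> 0"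
    have "theta_sharp S g0 g \<bullet> (S *\<^sub>v theta_sharp S g0 g) = (\<Sum>i<p. ((1/s) * uf i) * ((1/s) * mv p Sf uf i))"
      unfolding scalar_prod_def using S th_idx Sth by (auto simp: lessThan_atLeast0 intro!: sum.cong)
    also have "\<dots> = (1/s)^2 * ip p uf (mv p Sf uf)"
      by (simp add: ip_def sum_distrib_left power2_eq_square algebra_simps)
    also have "\<dots> = 1 / s + ip k gf w / s^2" unfolding ipuf using s0
      by (simp add: field_simps power2_eq_square)
    finally have "theta_sharp S g0 g \<bullet> (S *\<^sub>v theta_sharp S g0 g) - theta_sharp S g0 g $ 0 = ip k gf w / s^2"
      unfolding th0 by simp
    moreover have "\<bar>ip k gf w / s^2\<bar> \<le> ls * vnorm_1 g / s^2"
      using gw s0 by (simp add: divide_right_mono)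
    ultimately show ?thesis by simp
  qed
  show "s > 0 \<Longrightarrow> vnorm_inf (S *\<^sub>v (theta_sharp S g0 g - col Th 0)) \<le> ls / s"
  proof -
    assume spos: "s > 0"
    have ls0: "0 \<le> ls" using el vnorm_inf_nonneg[of "sub_mm S *\<^sub>v (g - g0)"] by simp
    have STh: "S * Th = 1\<^sub>m p" using inv S unfolding inverts_mat_def by simp
    have dv: "theta_sharp S g0 g - col Th 0 = vec p (\<lambda>j. (1 / s) * uf j - Th $$ (j, 0))"
      using Th th_idx th_dim by (intro eq_vecI) auto
    have entry: "(S *\<^sub>v (theta_sharp S g0 g - col Th 0)) $ i = (1/s) * mv p Sf uf i - (if i = 0 then 1 else 0)"
      if i: "i < p" for i
    proof -
      have "(S *\<^sub>v (theta_sharp S g0 g - col Th 0)) $ i = (\<Sum>j<p. S $$ (i,j) * ((1 / s) * uf j - Th $$ (j, 0)))"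
        unfolding dv by (rule mat_vec_sum[OF S i])
      also have "\<dots> = (1/s) * mv p Sf uf i - (\<Sum>j<p. S $$ (i,j) * Th $$ (j, 0))"
        by (simp add: mv_def Sf_def sum_distrib_left algebra_simps sum_subtractf)
      also have "(\<Sum>j<p. S $$ (i,j) * Th $$ (j, 0)) = (S * Th) $$ (i, 0)"
        using S Th i pk by (auto simp: scalar_prod_def lessThan_atLeast0 intro!: sum.cong)
      also have "\<dots> = (if i = 0 then 1 else 0)" unfolding STh using i pk by simp
      finally show ?thesis .
    qed
    show ?thesis
    proof (rule vnorm_inf_le)
      show "0 \<le> ls / s" using ls0 spos by simp
      fix i assume "i < dim_vec (S *\<^sub>v (theta_sharp S g0 g - col Th 0))"
      hence i: "i < p" using S by simp
      show "\<bar>(S *\<^sub>v (theta_sharp S g0 g - col Th 0)) $ i\<bar> \<le> ls / s"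
      proof (cases i)
        case 0
        thus ?thesis using entry[OF i] mv_uf0 spos ls0 by simp
      next
        case (Suc i')
        hence i': "i' < k" using i pk by simp
        have "\<bar>(S *\<^sub>v (theta_sharp S g0 g - col Th 0)) $ i\<bar> = \<bar>w i'\<bar> / s"
          using entry[OF i] mv_ufS[OF i'] Suc spos by (simp add: abs_mult abs_minus_commute)
        also have "\<dots> \<le> ls / s" using w_bound[OF i'] spos by (simp add: divide_right_mono)
        finally show ?thesis .
      qed
    qed
  qed
qed

theorem lemma2p1:
  fixes p :: "nat \<Rightarrow> nat"
    and Sigma Theta :: "nat \<Rightarrow> real mat"
    and Lmin :: "nat \<Rightarrow> real"
    and gamma0 gs :: "nat \<Rightarrow> real vec"
    and ls :: "nat \<Rightarrow> real"
  assumes p_pos: "\<And>n. p n \<ge> 1"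
    and Sigma_carrier: "\<And>n. Sigma n \<in> carrier_mat (p n) (p n)"
    and Sigma_sym: "\<And>n. transpose_mat (Sigma n) = Sigma n"
    and Sigma_diag: "\<And>n i. i < p n \<Longrightarrow> Sigma n $$ (i, i) = 1"
    and Theta_carrier: "\<And>n. Theta n \<in> carrier_mat (p n) (p n)"
    and Theta_inv: "\<And>n. inverts_mat (Sigma n) (Theta n) \<and> inverts_mat (Theta n) (Sigma n)"
    and Lmin_eig: "\<And>n. eigenvalue (Sigma n) ((Lmin n)\<^sup>2)"
    and Lmin_min: "\<And>n k. eigenvalue (Sigma n) k \<Longrightarrow> (Lmin n)\<^sup>2 \<le> k"
    and Lmin_bound: "(\<lambda>n. 1 / (Lmin n)\<^sup>2) \<in> O(\<lambda>n. 1)"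
    and gamma0_carrier: "\<And>n. gamma0 n \<in> carrier_vec (p n - 1)"
    and gamma0_def: "\<And>n. sub_mm (Sigma n) *\<^sub>v gamma0 n = sub_m1 (Sigma n)"
    and gs_carrier: "\<And>n. gs n \<in> carrier_vec (p n - 1)"
    and ls_pos: "\<And>n. ls n > 0"
    and elig1: "\<And>n. vnorm_inf (sub_mm (Sigma n) *\<^sub>v (gs n - gamma0 n)) \<le> ls n"
    and elig2: "(\<lambda>n. ls n * vnorm_1 (gs n)) \<longlonglongrightarrow> 0"
  shows
    "(\<exists>e. e \<longlonglongrightarrow> 0 \<and>
        (\<forall>n. 1 - gamma0 n \<bullet> (sub_mm (Sigma n) *\<^sub>v gs n) \<ge> (Lmin n)\<^sup>2 - e n))
   \<and> (\<exists>c>0. \<forall>\<^sub>F n in sequentially. 1 - gamma0 n \<bullet> (sub_mm (Sigma n) *\<^sub>v gs n) \<ge> c)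
   \<and> (\<forall>\<^sub>F n in sequentially.
        vnorm_inf (Sigma n *\<^sub>v (theta_sharp (Sigma n) (gamma0 n) (gs n) - col (Theta n) 0))
          \<le> ls n / (1 - gamma0 n \<bullet> (sub_mm (Sigma n) *\<^sub>v gs n)))
   \<and> (\<lambda>n. ls n / (1 - gamma0 n \<bullet> (sub_mm (Sigma n) *\<^sub>v gs n))) \<in> O(ls)
   \<and> (\<lambda>n. theta_sharp (Sigma n) (gamma0 n) (gs n) \<bullet>
            (Sigma n *\<^sub>v theta_sharp (Sigma n) (gamma0 n) (gs n))
          - theta_sharp (Sigma n) (gamma0 n) (gs n) $ 0) \<longlonglongrightarrow> 0
   \<and> (\<exists>e. e \<longlonglongrightarrow> 0 \<and> (\<forall>\<^sub>F n in sequentially.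
          theta_sharp (Sigma n) (gamma0 n) (gs n) $ 0 \<le> Theta n $$ (0, 0) + e n))
   \<and> ((\<exists>c>0. \<forall>\<^sub>F n in sequentially.
          Theta n $$ (0, 0) - theta_sharp (Sigma n) (gamma0 n) (gs n) $ 0 \<ge> c)
       \<longrightarrow> (\<exists>c>0. \<forall>\<^sub>F n in sequentially. ls n * vnorm_1 (gamma0 n) \<ge> c))"
proof -
  define s0 where "s0 n = 1 - gamma0 n \<bullet> (sub_mm (Sigma n) *\<^sub>v gamma0 n)" for n
  define s where "s n = 1 - gamma0 n \<bullet> (sub_mm (Sigma n) *\<^sub>v gs n)" for n
  define e where "e n = ls n * vnorm_1 (gs n)" for n
  define th where "th n = theta_sharp (Sigma n) (gamma0 n) (gs n)" for n
  note FN = fixed_n[OF p_pos Sigma_carrier Sigma_sym Sigma_diag Theta_carrier Theta_inv Lmin_min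
      zero_le_power2 gamma0_carrier gamma0_def gs_carrier elig1]
  have F1: "(Lmin n)^2 \<le> s0 n" for n using FN(1)[of n] by (simp add: s0_def)
  have F2: "s0 n - e n \<le> s n" for n using FN(2)[of n] by (simp add: s0_def s_def e_def)
  have F3: "s n \<le> s0 n + ls n * vnorm_1 (gamma0 n)" for n using FN(3)[of n] by (simp add: s0_def s_def)
  have F4: "Theta n $$ (0,0) * s0 n = 1" for n using FN(4)[of n] by (simp add: s0_def)
  have F5: "s n > 0 \<Longrightarrow> vnorm_inf (Sigma n *\<^sub>v (th n - col (Theta n) 0)) \<le> ls n / s n" for n
    using FN(5)[of n] by (simp add: s_def th_def)
  have F6: "s n \<noteq> 0 \<Longrightarrow> \<bar>th n \<bullet> (Sigma n *\<^sub>v th n) - th n $ 0\<bar> \<le> e n / (s n)^2" for n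
    using FN(6)[of n] by (simp add: s_def th_def e_def)
  have F7: "th n $ 0 = 1 / s n" for n using FN(7)[of n] by (simp add: s_def th_def)
  have Lpos: "(Lmin n)^2 > 0" for n
  proof -
    have "(Lmin n)^2 \<noteq> 0"
    proof
      assume L0: "(Lmin n)^2 = 0"
      from Lmin_eig[of n] obtain v where v: "eigenvector (Sigma n) v ((Lmin n)^2)"
        unfolding eigenvalue_def by blast
      hence vc: "v \<in> carrier_vec (p n)" and vnz: "v \<noteq> 0\<^sub>v (p n)" and Sv: "Sigma n *\<^sub>v v = 0 \<cdot>\<^sub>v v"
        using Sigma_carrier[of n] L0 unfolding eigenvector_def by auto
      have TS: "Theta n * Sigma n = 1\<^sub>m (p n)" using Theta_inv[of n] Theta_carrier[of n]
        unfolding inverts_mat_def by simp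
      have "v = (Theta n * Sigma n) *\<^sub>v v" using TS vc by simp
      also have "\<dots> = Theta n *\<^sub>v (Sigma n *\<^sub>v v)"
        by (rule assoc_mult_mat_vec) (use Theta_carrier[of n] Sigma_carrier[of n] vc in auto)
      also have "Sigma n *\<^sub>v v = 0\<^sub>v (p n)" using Sv vc by auto
      also have "Theta n *\<^sub>v 0\<^sub>v (p n) = 0\<^sub>v (p n)" using Theta_carrier[of n] by auto
      finally show False using vnz by simp
    qed
    thus ?thesis by (simp add: less_le)
  qed
  from Lmin_bound obtain C where C: "C > 0" and evC: "\<forall>\<^sub>F n in sequentially. norm (1 / (Lmin n)^2) \<le> C * norm (1::real)"
    by (rule landau_o.bigE)
  have evL: "\<forall>\<^sub>F n in sequentially. (Lmin n)^2 \<ge> 1 / C"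
    using evC
  proof (rule eventually_mono)
    fix n assume "norm (1 / (Lmin n)^2) \<le> C * norm (1::real)"
    hence "1 / (Lmin n)^2 \<le> C" by simp
    thus "(Lmin n)^2 \<ge> 1 / C" using Lpos[of n] C by (simp add: field_simps)
  qed
  have e_lim: "e \<longlonglongrightarrow> 0" using elig2 by (simp add: e_def[abs_def])
  have e0: "e n \<ge> 0" for n using ls_pos[of n] by (simp add: e_def vnorm_1_def sum_nonneg)
  have eve: "\<forall>\<^sub>F n in sequentially. e n < 1 / (2*C)"
    using order_tendstoD(2)[OF e_lim] C by simp
  have evs: "\<forall>\<^sub>F n in sequentially. s n \<ge> 1 / (2*C) \<and> s0 n \<ge> 1 / C \<and> e n < 1 / (2*C)"
    using evL eve
  proof (eventually_elim)
    case (elim n)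
    have "s0 n \<ge> 1 / C" using elim F1[of n] by simp
    moreover have "1 / C - 1 / (2*C) = 1 / (2*C)" using C by (simp add: field_simps)
    ultimately show ?case using F2[of n] elim by simp
  qed
  have c2: "1 / (2*C) > 0" using C by simp
  have P1: "\<exists>e. e \<longlonglongrightarrow> 0 \<and> (\<forall>n. s n \<ge> (Lmin n)\<^sup>2 - e n)"
  proof -
    have "(Lmin n)^2 - e n \<le> s n" for n using F1[of n] F2[of n] by linarith
    thus ?thesis using e_lim by blast
  qed
  have P2: "\<exists>c>0. \<forall>\<^sub>F n in sequentially. s n \<ge> c"
    using c2 evs by (intro exI[of _ "1/(2*C)"]) (auto elim: eventually_mono)
  have P3: "\<forall>\<^sub>F n in sequentially. vnorm_inf (Sigma n *\<^sub>v (th n - col (Theta n) 0)) \<le> ls n / s n"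
    using evs
  proof (rule eventually_mono)
    fix n assume "s n \<ge> 1 / (2*C) \<and> s0 n \<ge> 1 / C \<and> e n < 1 / (2*C)"
    hence "s n > 0" using c2 by linarith
    thus "vnorm_inf (Sigma n *\<^sub>v (th n - col (Theta n) 0)) \<le> ls n / s n" by (rule F5)
  qed
  have P4: "(\<lambda>n. ls n / s n) \<in> O(ls)"
  proof (rule bigoI)
    show "\<forall>\<^sub>F n in sequentially. norm (ls n / s n) \<le> (2*C) * norm (ls n)"
      using evs
    proof (rule eventually_mono)
      fix n assume h: "s n \<ge> 1 / (2*C) \<and> s0 n \<ge> 1 / C \<and> e n < 1 / (2*C)"
      hence sp: "s n > 0" using c2 by linarith
      have "1 \<le> 2*C * s n" using h C by (simp add: field_simps)
      hence "ls n \<le> (2*C) * ls n * s n" using ls_pos[of n] mult_left_mono[of 1 "2*C*s n" "ls n"]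
        by (simp add: algebra_simps)
      hence "ls n / s n \<le> (2*C) * ls n" using sp by (simp add: field_simps)
      thus "norm (ls n / s n) \<le> (2*C) * norm (ls n)" using sp ls_pos[of n] by simp
    qed
  qed
  have P5: "(\<lambda>n. th n \<bullet> (Sigma n *\<^sub>v th n) - th n $ 0) \<longlonglongrightarrow> 0"
  proof (rule tendsto_0_le[OF e_lim])
    show "\<forall>\<^sub>F n in sequentially. norm (th n \<bullet> (Sigma n *\<^sub>v th n) - th n $ 0) \<le> norm (e n) * (2*C)^2"
      using evs
    proof (rule eventually_mono)
      fix n assume h: "s n \<ge> 1 / (2*C) \<and> s0 n \<ge> 1 / C \<and> e n < 1 / (2*C)"
      hence sp: "s n > 0" using c2 by linarith
      have "1 \<le> 2*C * s n" using h C by (simp add: field_simps)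
      hence "1 \<le> (2*C * s n)^2" using C sp by (simp add: one_le_power)
      hence "e n \<le> e n * (2*C * s n)^2" using e0[of n] mult_left_mono by fastforce
      hence "e n / (s n)^2 \<le> e n * (2*C)^2" using sp by (simp add: field_simps power_mult_distrib)
      with F6[of n] sp show "norm (th n \<bullet> (Sigma n *\<^sub>v th n) - th n $ 0) \<le> norm (e n) * (2*C)^2"
        using e0[of n] by simp
    qed
  qed
  have P6: "\<exists>e. e \<longlonglongrightarrow> 0 \<and> (\<forall>\<^sub>F n in sequentially. th n $ 0 \<le> Theta n $$ (0, 0) + e n)"
  proof (intro exI conjI)
    show "(\<lambda>n. 2 * C^2 * e n) \<longlonglongrightarrow> 0" using tendsto_mult_right_zero[OF e_lim, of "2*C^2"] by simp
    show "\<forall>\<^sub>F n in sequentially. th n $ 0 \<le> Theta n $$ (0, 0) + 2 * C^2 * e n"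
      using evs
    proof (rule eventually_mono)
      fix n assume h: "s n \<ge> 1 / (2*C) \<and> s0 n \<ge> 1 / C \<and> e n < 1 / (2*C)"
      hence sp: "s n > 0" and s0p: "s0 n > 0" using c2 C by (linarith, smt (verit) divide_pos_pos)
      have T: "Theta n $$ (0,0) = 1 / s0 n" using F4[of n] s0p by (simp add: field_simps)
      have "1 / (2*C^2) \<le> s n * s0 n"
      proof -
        have "1 / (2*C^2) = (1/(2*C)) * (1/C)" by (simp add: power2_eq_square)
        also have "\<dots> \<le> s n * s0 n" using h c2 C sp by (intro mult_mono) auto
        finally show ?thesis .
      qed
      hence q: "1 \<le> 2*C^2 * (s n * s0 n)" using C by (simp add: field_simps)
      have "1 / s n - 1 / s0 n = (s0 n - s n) / (s n * s0 n)" using sp s0p by (simp add: field_simps)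
      also have "\<dots> \<le> e n / (s n * s0 n)" using F2[of n] sp s0p by (intro divide_right_mono) auto
      also have "\<dots> \<le> 2 * C^2 * e n"
      proof -
        have "e n \<le> e n * (2*C^2 * (s n * s0 n))" using q e0[of n] mult_left_mono by fastforce
        thus ?thesis using sp s0p by (simp add: field_simps)
      qed
      finally show "th n $ 0 \<le> Theta n $$ (0, 0) + 2 * C^2 * e n" unfolding F7 T by simp
    qed
  qed
  have P7: "(\<exists>c>0. \<forall>\<^sub>F n in sequentially. Theta n $$ (0, 0) - th n $ 0 \<ge> c)
       \<longrightarrow> (\<exists>c>0. \<forall>\<^sub>F n in sequentially. ls n * vnorm_1 (gamma0 n) \<ge> c)"
  proof
    assume "\<exists>c>0. \<forall>\<^sub>F n in sequentially. Theta n $$ (0, 0) - th n $ 0 \<ge> c"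
    then obtain c where c: "c > 0" and evc: "\<forall>\<^sub>F n in sequentially. Theta n $$ (0, 0) - th n $ 0 \<ge> c"
      by blast
    show "\<exists>c>0. \<forall>\<^sub>F n in sequentially. ls n * vnorm_1 (gamma0 n) \<ge> c"
    proof (intro exI conjI)
      show "c / (2*C^2) > 0" using c C by simp
      show "\<forall>\<^sub>F n in sequentially. ls n * vnorm_1 (gamma0 n) \<ge> c / (2*C^2)"
        using evs evc
      proof (eventually_elim)
        case (elim n)
        hence sp: "s n > 0" and s0p: "s0 n > 0" using c2 C by (linarith, smt (verit) divide_pos_pos)
        have T: "Theta n $$ (0,0) = 1 / s0 n" using F4[of n] s0p by (simp add: field_simps)
        have "1 / (2*C^2) \<le> s n * s0 n"
        proof -
          have "1 / (2*C^2) = (1/(2*C)) * (1/C)" by (simp add: power2_eq_square)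
          also have "\<dots> \<le> s n * s0 n" using elim c2 C sp by (intro mult_mono) auto
          finally show ?thesis .
        qed
        define X where "X = ls n * vnorm_1 (gamma0 n)"
        have "c \<le> 1 / s0 n - 1 / s n" using elim(2) unfolding F7 T .
        also have "\<dots> = (s n - s0 n) / (s n * s0 n)" using sp s0p by (simp add: field_simps)
        also have "\<dots> \<le> X / (s n * s0 n)" using F3[of n] sp s0p unfolding X_def
          by (intro divide_right_mono) auto
        finally have "c * (s n * s0 n) \<le> X" using sp s0p by (simp add: field_simps)
        moreover have "c / (2*C^2) \<le> c * (s n * s0 n)"
          using mult_left_mono[OF \<open>1 / (2*C^2) \<le> s n * s0 n\<close>, of c] c by simp
        ultimately show ?case unfolding X_def by simp
      qed
    qed
  qed
  show ?thesis
    unfolding s_def[symmetric] th_def[symmetric]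
    using P1 P2 P3 P4 P5 P6 P7 by blast
qed

end
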